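(* Let $(X,\rho)$ be a symmetric rack and $A=\{A_x\mid x\in X\}$ a family of abelian groups. Suppose given group isomorphisms $\phi_{x,y}:A_x\to A_{x*y}$, group homomorphisms $\psi_{x,y}:A_y\to A_{x*y}$ and $\eta_x:A_x\to A_{\rho(x)}$, and a map $\sigma$ assigning to each $(x,y)\in X\times X$ an element $\sigma_{x,y}\in A_{x*y}$. Define $\alpha_{x,y}:A_x\times A_y\to A_{x*y}$ and $\beta_x:A_x\to A_{\rho(x)}$ by $$\alpha_{x,y}(a,b)=\phi_{x,y}(a)+\psi_{x,y}(b)+\sigma_{x,y},\qquad \beta_x(a)=\eta_x(a).$$ Then: (A) $(\alpha,\beta)$ is a dynamical cocycle for the symmetric rack $(X,\rho)$ over $A$ if and only if $(A,\phi,\psi,\eta)$ is an $(X,\rho)$-module and $\sigma$ is a symmetric rack 2-cocycle. If moreover $(X,\rho)$ is a symmetric quandle, then $(\alpha,\beta)$ is a dynamical cocycle for $(X,\rho)$ over $A$ if and only if $(A,\phi,\psi,\eta)$ is an $(X,\rho)$-module (for the symmetric quandle, i.e. including (M9)) and $\sigma$ is a symmetric quandle 2-cocycle. (B) Let $\sigma'$ be another symmetric rack (respectively, quandle) 2-cocycle and $(\alpha',\beta')$ the pair defined from $\sigma'$ in the same way. If $\sigma$ and $\sigma'$ are cohomologous, then $(\alpha,\beta)$ and $(\alpha',\beta')$ are cohomologous.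
   Context: A rack is a set $X$ with binary operation $*$ such that each $x\mapsto x*y$ is bijective (inverse $x\mapsto x*^{-1}y$) and $(x*y)*z=(x*z)*(y*z)$; a quandle also satisfies $x*x=x$. A good involution is $\rho:X\to X$ with $\rho^2=\mathrm{id}$, $\rho(x*y)=\rho(x)*y$, $x*\rho(y)=x*^{-1}y$; $(X,\rho)$ is a symmetric rack (quandle). $(X,\rho)$-module: data $(A,\phi,\psi,\eta)$ as in the claim satisfying, for all $x,y,z\in X$, $a\in A_z$, $b\in A_y$: (M1) $\phi_{x*y,z}\phi_{x,y}=\phi_{x*z,y*z}\phi_{x,z}$; (M2) $\phi_{x*y,z}\psi_{x,y}=\psi_{x*z,y*z}\phi_{y,z}$; (M3) $\eta_{\rho(x)}\eta_x=\mathrm{id}$; (M4) $\eta_{x*y}\phi_{x,y}=\phi_{\rho(x),y}\eta_x$; (M5) $\psi_{\rho(x),y}=\eta_{x*y}\psi_{x,y}$; (M6) $\phi_{x*^{-1}y,y}\phi_{x,\rho(y)}=\mathrm{id}$; (M7) $\psi_{x*y,z}(a)=\phi_{x*z,y*z}\psi_{x,z}(a)+\psi_{x*z,y*z}\psi_{y,z}(a)$; (M8) $\phi_{x*^{-1}y,y}\psi_{x,\rho(y)}(\eta_y(b))=-\psi_{x*\rho(y),y}(b)$. For a symmetric quandle one additionally requires (M9) $\phi_{x,x}(a)+\psi_{x,x}(a)=a$ for all $x$, $a\in A_x$. Symmetric rack 2-cocycle: a map $\sigma$ with $\sigma_{x,y}\in A_{x*y}$ such that for all $x,y,z$: (F1)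 $\sigma_{x*y,z}+\phi_{x*y,z}(\sigma_{x,y})=\phi_{x*z,y*z}(\sigma_{x,z})+\sigma_{x*z,y*z}+\psi_{x*z,y*z}(\sigma_{y,z})$; (F2) $\sigma_{\rho(x),y}=\eta_{x*y}(\sigma_{x,y})$; (F3) $\phi_{x*\rho(y),y}(\sigma_{x,\rho(y)})=-\sigma_{x*\rho(y),y}$. A symmetric quandle 2-cocycle additionally satisfies $\sigma_{x,x}=0$ for all $x$. Two such 2-cocycles $\sigma,\sigma'$ are cohomologous if there is $\tau$ with $\tau(x)\in A_x$, $\eta_x(\tau(x))=\tau(\rho(x))$ and $\sigma_{x,y}-\sigma'_{x,y}=\phi_{x,y}(\tau(x))-\tau(x*y)+\psi_{x,y}(\tau(y))$ for all $x,y$. Dynamical cocycle of $(X,\rho)$ over a family of sets $S=\{S_x\}$: families of maps $\alpha_{x,y}:S_x\times S_y\to S_{x*y}$, $\beta_x:S_x\to S_{\rho(x)}$ such that for all $x,y,z$, $s\in S_x,t\in S_y,w\in S_z$ (writing $\alpha_{x,y}(t)(s)=\alpha_{x,y}(s,t)$): (1) $\alpha_{x,y}(t)$ is a bijection $S_x\to S_{x*y}$; (2) $\alpha_{x*y,z}(\alpha_{x,y}(s,t),w)=\alpha_{x*z,y*z}(\alpha_{x,z}(s,w),\alpha_{y,z}(t,w))$; (3) $\alpha_{\rho(x),y}(\beta_x(s),t)=\beta_{x*y}(\alpha_{x,y}(s,t))$; (4) $\beta_{\rho(x)}\beta_x(s)=s$; (5) $\alpha_{x,\rho(y)}(\beta_y(t))(s)=(\alpha_{x*^{-1}y,y}(t))^{-1}(s)$;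 and for a symmetric quandle also (6) $\alpha_{x,x}(s,s)=s$. Two dynamical cocycles $(\alpha,\beta),(\alpha',\beta')$ over $S$ are cohomologous if there are permutations $\gamma_x$ of $S_x$ with $\alpha'_{x,y}(s,t)=\gamma_{x*y}(\alpha_{x,y}(\gamma_x^{-1}(s),\gamma_y^{-1}(t)))$ and $\beta'_x(s)=\gamma_{\rho(x)}(\beta_x(\gamma_x^{-1}(s)))$. *)

theory Defs
  imports "HOL-Algebra.Group"
begin

definition rack :: "('x \<Rightarrow> 'x \<Rightarrow> 'x) \<Rightarrow> bool" where
  "rack op \<longleftrightarrow> (\<forall>y. bij (\<lambda>x. op x y)) \<and>
     (\<forall>x y z. op (op x y) z = op (op x z) (op y z))"

definition rinv :: "('x \<Rightarrow> 'x \<Rightarrow> 'x) \<Rightarrow> 'x \<Rightarrow> 'x \<Rightarrow> 'x" where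
  "rinv op x y = inv_into UNIV (\<lambda>z. op z y) x"

definition quandle :: "('x \<Rightarrow> 'x \<Rightarrow> 'x) \<Rightarrow> bool" where
  "quandle op \<longleftrightarrow> rack op \<and> (\<forall>x. op x x = x)"

definition good_involution :: "('x \<Rightarrow> 'x \<Rightarrow> 'x) \<Rightarrow> ('x \<Rightarrow> 'x) \<Rightarrow> bool" where
  "good_involution op \<rho> \<longleftrightarrow> (\<forall>x. \<rho> (\<rho> x) = x) \<and>
     (\<forall>x y. \<rho> (op x y) = op (\<rho> x) y) \<and> (\<forall>x y. op x (\<rho> y) = rinv op x y)"

definition symmetric_rack :: "('x \<Rightarrow> 'x \<Rightarrow> 'x) \<Rightarrow> ('x \<Rightarrow> 'x) \<Rightarrow> bool" where
  "symmetric_rack op \<rho> \<longleftrightarrow> rack op \<and> good_involution op \<rho>"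

definition symmetric_quandle :: "('x \<Rightarrow> 'x \<Rightarrow> 'x) \<Rightarrow> ('x \<Rightarrow> 'x) \<Rightarrow> bool" where
  "symmetric_quandle op \<rho> \<longleftrightarrow> quandle op \<and> good_involution op \<rho>"

text \<open>The abelian groups A_x are HOL-Algebra commutative groups (written
multiplicatively: the group operation plays the role of +, inv of -, one of 0).\<close>

definition sym_rack_module ::
  "('x \<Rightarrow> 'x \<Rightarrow> 'x) \<Rightarrow> ('x \<Rightarrow> 'x) \<Rightarrow> ('x \<Rightarrow> ('a, 'm) monoid_scheme)
   \<Rightarrow> ('x \<Rightarrow> 'x \<Rightarrow> 'a \<Rightarrow> 'a) \<Rightarrow> ('x \<Rightarrow> 'x \<Rightarrow> 'a \<Rightarrow> 'a) \<Rightarrow> ('x \<Rightarrow> 'a \<Rightarrow> 'a) \<Rightarrow> bool" where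
  "sym_rack_module op \<rho> A \<phi> \<psi> \<eta> \<longleftrightarrow>
     (\<forall>x. comm_group (A x)) \<and>
     (\<forall>x y. \<phi> x y \<in> iso (A x) (A (op x y))) \<and>
     (\<forall>x y. \<psi> x y \<in> hom (A y) (A (op x y))) \<and>
     (\<forall>x. \<eta> x \<in> hom (A x) (A (\<rho> x))) \<and>
     \<comment> \<open>(M1)\<close>
     (\<forall>x y z. \<forall>a\<in>carrier (A x).
        \<phi> (op x y) z (\<phi> x y a) = \<phi> (op x z) (op y z) (\<phi> x z a)) \<and>
     \<comment> \<open>(M2)\<close>
     (\<forall>x y z. \<forall>b\<in>carrier (A y).
        \<phi> (op x y) z (\<psi> x y b) = \<psi> (op x z) (op y z) (\<phi> y z b)) \<and>
     \<comment> \<open>(M3)\<close>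
     (\<forall>x. \<forall>a\<in>carrier (A x). \<eta> (\<rho> x) (\<eta> x a) = a) \<and>
     \<comment> \<open>(M4)\<close>
     (\<forall>x y. \<forall>a\<in>carrier (A x). \<eta> (op x y) (\<phi> x y a) = \<phi> (\<rho> x) y (\<eta> x a)) \<and>
     \<comment> \<open>(M5)\<close>
     (\<forall>x y. \<forall>b\<in>carrier (A y). \<psi> (\<rho> x) y b = \<eta> (op x y) (\<psi> x y b)) \<and>
     \<comment> \<open>(M6)\<close>
     (\<forall>x y. \<forall>a\<in>carrier (A x). \<phi> (rinv op x y) y (\<phi> x (\<rho> y) a) = a) \<and>
     \<comment> \<open>(M7)\<close>
     (\<forall>x y z. \<forall>a\<in>carrier (A z).
        \<psi> (op x y) z a = \<phi> (op x z) (op y z) (\<psi> x z a)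
                          \<otimes>\<^bsub>A (op (op x z) (op y z))\<^esub> \<psi> (op x z) (op y z) (\<psi> y z a)) \<and>
     \<comment> \<open>(M8)\<close>
     (\<forall>x y. \<forall>b\<in>carrier (A y).
        \<phi> (rinv op x y) y (\<psi> x (\<rho> y) (\<eta> y b))
          = inv\<^bsub>A (op (op x (\<rho> y)) y)\<^esub> (\<psi> (op x (\<rho> y)) y b))"

definition sym_quandle_module ::
  "('x \<Rightarrow> 'x \<Rightarrow> 'x) \<Rightarrow> ('x \<Rightarrow> 'x) \<Rightarrow> ('x \<Rightarrow> ('a, 'm) monoid_scheme)
   \<Rightarrow> ('x \<Rightarrow> 'x \<Rightarrow> 'a \<Rightarrow> 'a) \<Rightarrow> ('x \<Rightarrow> 'x \<Rightarrow> 'a \<Rightarrow> 'a) \<Rightarrow> ('x \<Rightarrow> 'a \<Rightarrow> 'a) \<Rightarrow> bool" where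
  "sym_quandle_module op \<rho> A \<phi> \<psi> \<eta> \<longleftrightarrow>
     sym_rack_module op \<rho> A \<phi> \<psi> \<eta> \<and>
     \<comment> \<open>(M9)\<close>
     (\<forall>x. \<forall>a\<in>carrier (A x). \<phi> x x a \<otimes>\<^bsub>A (op x x)\<^esub> \<psi> x x a = a)"

definition sym_rack_2cocycle ::
  "('x \<Rightarrow> 'x \<Rightarrow> 'x) \<Rightarrow> ('x \<Rightarrow> 'x) \<Rightarrow> ('x \<Rightarrow> ('a, 'm) monoid_scheme)
   \<Rightarrow> ('x \<Rightarrow> 'x \<Rightarrow> 'a \<Rightarrow> 'a) \<Rightarrow> ('x \<Rightarrow> 'x \<Rightarrow> 'a \<Rightarrow> 'a) \<Rightarrow> ('x \<Rightarrow> 'a \<Rightarrow> 'a)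
   \<Rightarrow> ('x \<Rightarrow> 'x \<Rightarrow> 'a) \<Rightarrow> bool" where
  "sym_rack_2cocycle op \<rho> A \<phi> \<psi> \<eta> \<sigma> \<longleftrightarrow>
     (\<forall>x y. \<sigma> x y \<in> carrier (A (op x y))) \<and>
     \<comment> \<open>(F1)\<close>
     (\<forall>x y z.
        \<sigma> (op x y) z \<otimes>\<^bsub>A (op (op x y) z)\<^esub> \<phi> (op x y) z (\<sigma> x y)
        = \<phi> (op x z) (op y z) (\<sigma> x z) \<otimes>\<^bsub>A (op (op x z) (op y z))\<^esub> \<sigma> (op x z) (op y z)
            \<otimes>\<^bsub>A (op (op x z) (op y z))\<^esub> \<psi> (op x z) (op y z) (\<sigma> y z)) \<and>
     \<comment> \<open>(F2)\<close>
     (\<forall>x y. \<sigma> (\<rho> x) y = \<eta> (op x y) (\<sigma> x y)) \<and>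
     \<comment> \<open>(F3)\<close>
     (\<forall>x y. \<phi> (op x (\<rho> y)) y (\<sigma> x (\<rho> y))
              = inv\<^bsub>A (op (op x (\<rho> y)) y)\<^esub> (\<sigma> (op x (\<rho> y)) y))"

definition sym_quandle_2cocycle ::
  "('x \<Rightarrow> 'x \<Rightarrow> 'x) \<Rightarrow> ('x \<Rightarrow> 'x) \<Rightarrow> ('x \<Rightarrow> ('a, 'm) monoid_scheme)
   \<Rightarrow> ('x \<Rightarrow> 'x \<Rightarrow> 'a \<Rightarrow> 'a) \<Rightarrow> ('x \<Rightarrow> 'x \<Rightarrow> 'a \<Rightarrow> 'a) \<Rightarrow> ('x \<Rightarrow> 'a \<Rightarrow> 'a)
   \<Rightarrow> ('x \<Rightarrow> 'x \<Rightarrow> 'a) \<Rightarrow> bool" where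
  "sym_quandle_2cocycle op \<rho> A \<phi> \<psi> \<eta> \<sigma> \<longleftrightarrow>
     sym_rack_2cocycle op \<rho> A \<phi> \<psi> \<eta> \<sigma> \<and> (\<forall>x. \<sigma> x x = \<one>\<^bsub>A (op x x)\<^esub>)"

definition cohomologous_2cocycles ::
  "('x \<Rightarrow> 'x \<Rightarrow> 'x) \<Rightarrow> ('x \<Rightarrow> 'x) \<Rightarrow> ('x \<Rightarrow> ('a, 'm) monoid_scheme)
   \<Rightarrow> ('x \<Rightarrow> 'x \<Rightarrow> 'a \<Rightarrow> 'a) \<Rightarrow> ('x \<Rightarrow> 'x \<Rightarrow> 'a \<Rightarrow> 'a) \<Rightarrow> ('x \<Rightarrow> 'a \<Rightarrow> 'a)
   \<Rightarrow> ('x \<Rightarrow> 'x \<Rightarrow> 'a) \<Rightarrow> ('x \<Rightarrow> 'x \<Rightarrow> 'a) \<Rightarrow> bool" where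
  "cohomologous_2cocycles op \<rho> A \<phi> \<psi> \<eta> \<sigma> \<sigma>' \<longleftrightarrow>
     (\<exists>\<tau>. (\<forall>x. \<tau> x \<in> carrier (A x)) \<and>
          (\<forall>x. \<eta> x (\<tau> x) = \<tau> (\<rho> x)) \<and>
          (\<forall>x y. \<sigma> x y \<otimes>\<^bsub>A (op x y)\<^esub> inv\<^bsub>A (op x y)\<^esub> (\<sigma>' x y)
                 = \<phi> x y (\<tau> x) \<otimes>\<^bsub>A (op x y)\<^esub> inv\<^bsub>A (op x y)\<^esub> (\<tau> (op x y))
                     \<otimes>\<^bsub>A (op x y)\<^esub> \<psi> x y (\<tau> y)))"

definition dynamical_cocycle ::
  "('x \<Rightarrow> 'x \<Rightarrow> 'x) \<Rightarrow> ('x \<Rightarrow> 'x) \<Rightarrow> ('x \<Rightarrow> 's set)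
   \<Rightarrow> ('x \<Rightarrow> 'x \<Rightarrow> 's \<Rightarrow> 's \<Rightarrow> 's) \<Rightarrow> ('x \<Rightarrow> 's \<Rightarrow> 's) \<Rightarrow> bool" where
  "dynamical_cocycle op \<rho> S \<alpha> \<beta> \<longleftrightarrow>
     \<comment> \<open>the maps have the stated domains and codomains\<close>
     (\<forall>x y. \<forall>s\<in>S x. \<forall>t\<in>S y. \<alpha> x y s t \<in> S (op x y)) \<and>
     (\<forall>x. \<forall>s\<in>S x. \<beta> x s \<in> S (\<rho> x)) \<and>
     \<comment> \<open>(1)\<close>
     (\<forall>x y. \<forall>t\<in>S y. bij_betw (\<lambda>s. \<alpha> x y s t) (S x) (S (op x y))) \<and>
     \<comment> \<open>(2)\<close>
     (\<forall>x y z. \<forall>s\<in>S x. \<forall>t\<in>S y. \<forall>w\<in>S z.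
        \<alpha> (op x y) z (\<alpha> x y s t) w = \<alpha> (op x z) (op y z) (\<alpha> x z s w) (\<alpha> y z t w)) \<and>
     \<comment> \<open>(3)\<close>
     (\<forall>x y. \<forall>s\<in>S x. \<forall>t\<in>S y. \<alpha> (\<rho> x) y (\<beta> x s) t = \<beta> (op x y) (\<alpha> x y s t)) \<and>
     \<comment> \<open>(4)\<close>
     (\<forall>x. \<forall>s\<in>S x. \<beta> (\<rho> x) (\<beta> x s) = s) \<and>
     \<comment> \<open>(5)\<close>
     (\<forall>x y. \<forall>s\<in>S x. \<forall>t\<in>S y.
        \<alpha> x (\<rho> y) s (\<beta> y t) = inv_into (S (rinv op x y)) (\<lambda>s'. \<alpha> (rinv op x y) y s' t) s)"

definition dynamical_cocycle_quandle ::
  "('x \<Rightarrow> 'x \<Rightarrow> 'x) \<Rightarrow> ('x \<Rightarrow> 'x) \<Rightarrow> ('x \<Rightarrow> 's set)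
   \<Rightarrow> ('x \<Rightarrow> 'x \<Rightarrow> 's \<Rightarrow> 's \<Rightarrow> 's) \<Rightarrow> ('x \<Rightarrow> 's \<Rightarrow> 's) \<Rightarrow> bool" where
  "dynamical_cocycle_quandle op \<rho> S \<alpha> \<beta> \<longleftrightarrow>
     dynamical_cocycle op \<rho> S \<alpha> \<beta> \<and> (\<forall>x. \<forall>s\<in>S x. \<alpha> x x s s = s)"

definition cohomologous_dyn ::
  "('x \<Rightarrow> 'x \<Rightarrow> 'x) \<Rightarrow> ('x \<Rightarrow> 'x) \<Rightarrow> ('x \<Rightarrow> 's set)
   \<Rightarrow> ('x \<Rightarrow> 'x \<Rightarrow> 's \<Rightarrow> 's \<Rightarrow> 's) \<Rightarrow> ('x \<Rightarrow> 's \<Rightarrow> 's)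
   \<Rightarrow> ('x \<Rightarrow> 'x \<Rightarrow> 's \<Rightarrow> 's \<Rightarrow> 's) \<Rightarrow> ('x \<Rightarrow> 's \<Rightarrow> 's) \<Rightarrow> bool" where
  "cohomologous_dyn op \<rho> S \<alpha> \<beta> \<alpha>' \<beta>' \<longleftrightarrow>
     (\<exists>\<gamma>. (\<forall>x. bij_betw (\<gamma> x) (S x) (S x)) \<and>
          (\<forall>x y. \<forall>s\<in>S x. \<forall>t\<in>S y.
             \<alpha>' x y s t = \<gamma> (op x y) (\<alpha> x y (inv_into (S x) (\<gamma> x) s) (inv_into (S y) (\<gamma> y) t))) \<and>
          (\<forall>x. \<forall>s\<in>S x. \<beta>' x s = \<gamma> (\<rho> x) (\<beta> x (inv_into (S x) (\<gamma> x) s))))"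

definition alpha_of ::
  "('x \<Rightarrow> 'x \<Rightarrow> 'x) \<Rightarrow> ('x \<Rightarrow> ('a, 'm) monoid_scheme)
   \<Rightarrow> ('x \<Rightarrow> 'x \<Rightarrow> 'a \<Rightarrow> 'a) \<Rightarrow> ('x \<Rightarrow> 'x \<Rightarrow> 'a \<Rightarrow> 'a) \<Rightarrow> ('x \<Rightarrow> 'x \<Rightarrow> 'a)
   \<Rightarrow> 'x \<Rightarrow> 'x \<Rightarrow> 'a \<Rightarrow> 'a \<Rightarrow> 'a" where
  "alpha_of op A \<phi> \<psi> \<sigma> x y a b =
     \<phi> x y a \<otimes>\<^bsub>A (op x y)\<^esub> \<psi> x y b \<otimes>\<^bsub>A (op x y)\<^esub> \<sigma> x y"

end

theory Submission imports Defs begin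
lemma affine3:
  fixes G G' :: "('a,'m) monoid_scheme"
  assumes G: "comm_group G" and GG: "G' = G"
    and f1: "f1 \<in> S1 \<rightarrow> carrier G" and g1: "g1 \<in> S1 \<rightarrow> carrier G"
    and f2: "f2 \<in> S2 \<rightarrow> carrier G" and g2: "g2 \<in> S2 \<rightarrow> carrier G"
    and f3: "f3 \<in> S3 \<rightarrow> carrier G" and g3: "g3 \<in> S3 \<rightarrow> carrier G"
    and u1: "u1 \<in> S1" "f1 u1 = \<one>\<^bsub>G\<^esub>" "g1 u1 = \<one>\<^bsub>G\<^esub>"
    and u2: "u2 \<in> S2" "f2 u2 = \<one>\<^bsub>G\<^esub>" "g2 u2 = \<one>\<^bsub>G\<^esub>"
    and u3: "u3 \<in> S3" "f3 u3 = \<one>\<^bsub>G\<^esub>" "g3 u3 = \<one>\<^bsub>G\<^esub>"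
    and c: "c \<in> carrier G" and d: "d \<in> carrier G"
  shows "(\<forall>s\<in>S1. \<forall>t\<in>S2. \<forall>w\<in>S3. f1 s \<otimes>\<^bsub>G\<^esub> f2 t \<otimes>\<^bsub>G\<^esub> f3 w \<otimes>\<^bsub>G\<^esub> c
            = g1 s \<otimes>\<^bsub>G'\<^esub> g2 t \<otimes>\<^bsub>G'\<^esub> g3 w \<otimes>\<^bsub>G'\<^esub> d)
    \<longleftrightarrow> (\<forall>s\<in>S1. f1 s = g1 s) \<and> (\<forall>t\<in>S2. f2 t = g2 t) \<and> (\<forall>w\<in>S3. f3 w = g3 w) \<and> c = d"
proof -
  interpret comm_group G by fact
  show ?thesis unfolding GG
  proof
    assume H: "\<forall>s\<in>S1. \<forall>t\<in>S2. \<forall>w\<in>S3. f1 s \<otimes>\<^bsub>G\<^esub> f2 t \<otimes>\<^bsub>G\<^esub> f3 w \<otimes>\<^bsub>G\<^esub> c = g1 s \<otimes>\<^bsub>G\<^esub> g2 t \<otimes>\<^bsub>G\<^esub> g3 w \<otimes>\<^bsub>G\<^esub> d"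
    have cd: "c = d" using H[rule_format, OF u1(1) u2(1) u3(1)] u1 u2 u3 c d by simp
    have "f1 s = g1 s" if "s \<in> S1" for s
    proof -
      have "f1 s \<otimes>\<^bsub>G\<^esub> c = g1 s \<otimes>\<^bsub>G\<^esub> c"
        using H[rule_format, OF that u2(1) u3(1)] u1 u2 u3 c d cd that f1 g1 by (simp add: Pi_iff)
      then show ?thesis using c that f1 g1 by (simp add: Pi_iff)
    qed
    moreover have "f2 s = g2 s" if "s \<in> S2" for s
    proof -
      have "f2 s \<otimes>\<^bsub>G\<^esub> c = g2 s \<otimes>\<^bsub>G\<^esub> c"
        using H[rule_format, OF u1(1) that u3(1)] u1 u2 u3 c d cd that f2 g2 by (simp add: Pi_iff)
      then show ?thesis using c that f2 g2 by (simp add: Pi_iff)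
    qed
    moreover have "f3 s = g3 s" if "s \<in> S3" for s
    proof -
      have "f3 s \<otimes>\<^bsub>G\<^esub> c = g3 s \<otimes>\<^bsub>G\<^esub> c"
        using H[rule_format, OF u1(1) u2(1) that] u1 u2 u3 c d cd that f3 g3 by (simp add: Pi_iff)
      then show ?thesis using c that f3 g3 by (simp add: Pi_iff)
    qed
    ultimately show "(\<forall>s\<in>S1. f1 s = g1 s) \<and> (\<forall>t\<in>S2. f2 t = g2 t) \<and> (\<forall>w\<in>S3. f3 w = g3 w) \<and> c = d"
      using cd by blast
  qed auto
qed

lemma affine2:
  fixes G G' :: "('a,'m) monoid_scheme"
  assumes G: "comm_group G" and GG: "G' = G"
    and f1: "f1 \<in> S1 \<rightarrow> carrier G" and g1: "g1 \<in> S1 \<rightarrow> carrier G"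
    and f2: "f2 \<in> S2 \<rightarrow> carrier G" and g2: "g2 \<in> S2 \<rightarrow> carrier G"
    and u1: "u1 \<in> S1" "f1 u1 = \<one>\<^bsub>G\<^esub>" "g1 u1 = \<one>\<^bsub>G\<^esub>"
    and u2: "u2 \<in> S2" "f2 u2 = \<one>\<^bsub>G\<^esub>" "g2 u2 = \<one>\<^bsub>G\<^esub>"
    and c: "c \<in> carrier G" and d: "d \<in> carrier G"
  shows "(\<forall>s\<in>S1. \<forall>t\<in>S2. f1 s \<otimes>\<^bsub>G\<^esub> f2 t \<otimes>\<^bsub>G\<^esub> c
            = g1 s \<otimes>\<^bsub>G'\<^esub> g2 t \<otimes>\<^bsub>G'\<^esub> d)
    \<longleftrightarrow> (\<forall>s\<in>S1. f1 s = g1 s) \<and> (\<forall>t\<in>S2. f2 t = g2 t) \<and> c = d"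
proof -
  interpret comm_group G by fact
  show ?thesis unfolding GG
  proof
    assume H: "\<forall>s\<in>S1. \<forall>t\<in>S2. f1 s \<otimes>\<^bsub>G\<^esub> f2 t \<otimes>\<^bsub>G\<^esub> c = g1 s \<otimes>\<^bsub>G\<^esub> g2 t \<otimes>\<^bsub>G\<^esub> d"
    have cd: "c = d" using H[rule_format, OF u1(1) u2(1)] u1 u2 c d by simp
    have "f1 s = g1 s" if "s \<in> S1" for s
    proof -
      have "f1 s \<otimes>\<^bsub>G\<^esub> c = g1 s \<otimes>\<^bsub>G\<^esub> c"
        using H[rule_format, OF that u2(1)] u1 u2 c d cd that f1 g1 by (simp add: Pi_iff)
      then show ?thesis using c that f1 g1 by (simp add: Pi_iff)
    qed
    moreover have "f2 s = g2 s" if "s \<in> S2" for s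
    proof -
      have "f2 s \<otimes>\<^bsub>G\<^esub> c = g2 s \<otimes>\<^bsub>G\<^esub> c"
        using H[rule_format, OF u1(1) that] u1 u2 c d cd that f2 g2 by (simp add: Pi_iff)
      then show ?thesis using c that f2 g2 by (simp add: Pi_iff)
    qed
    ultimately show "(\<forall>s\<in>S1. f1 s = g1 s) \<and> (\<forall>t\<in>S2. f2 t = g2 t) \<and> c = d"
      using cd by blast
  qed auto
qed

lemma affine2_id:
  fixes G :: "('a,'m) monoid_scheme"
  assumes G: "comm_group G"
    and S1: "S1 \<subseteq> carrier G" and f1: "f1 \<in> S1 \<rightarrow> carrier G" and f2: "f2 \<in> S2 \<rightarrow> carrier G"
    and u1: "\<one>\<^bsub>G\<^esub> \<in> S1" "f1 \<one>\<^bsub>G\<^esub> = \<one>\<^bsub>G\<^esub>"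
    and u2: "u2 \<in> S2" "f2 u2 = \<one>\<^bsub>G\<^esub>"
    and c: "c \<in> carrier G"
  shows "(\<forall>s\<in>S1. \<forall>t\<in>S2. f1 s \<otimes>\<^bsub>G\<^esub> f2 t \<otimes>\<^bsub>G\<^esub> c = s)
    \<longleftrightarrow> (\<forall>s\<in>S1. f1 s = s) \<and> (\<forall>t\<in>S2. f2 t = \<one>\<^bsub>G\<^esub>) \<and> c = \<one>\<^bsub>G\<^esub>"
proof -
  interpret comm_group G by fact
  have "(\<forall>s\<in>S1. \<forall>t\<in>S2. f1 s \<otimes>\<^bsub>G\<^esub> f2 t \<otimes>\<^bsub>G\<^esub> c = s)
     \<longleftrightarrow> (\<forall>s\<in>S1. \<forall>t\<in>S2. f1 s \<otimes>\<^bsub>G\<^esub> f2 t \<otimes>\<^bsub>G\<^esub> c = s \<otimes>\<^bsub>G\<^esub> (\<lambda>t. \<one>\<^bsub>G\<^esub>) t \<otimes>\<^bsub>G\<^esub> \<one>\<^bsub>G\<^esub>)"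
    using S1 by auto
  also have "\<dots> \<longleftrightarrow> (\<forall>s\<in>S1. f1 s = s) \<and> (\<forall>t\<in>S2. f2 t = \<one>\<^bsub>G\<^esub>) \<and> c = \<one>\<^bsub>G\<^esub>"
    by (rule affine2[OF G refl f1 _ f2 _ u1(1,2) _ u2 _ c]) (use S1 in auto)
  finally show ?thesis .
qed

lemma affine1_id:
  fixes G :: "('a,'m) monoid_scheme"
  assumes G: "comm_group G"
    and S1: "S1 \<subseteq> carrier G" and f1: "f1 \<in> S1 \<rightarrow> carrier G"
    and u1: "\<one>\<^bsub>G\<^esub> \<in> S1" "f1 \<one>\<^bsub>G\<^esub> = \<one>\<^bsub>G\<^esub>"
    and c: "c \<in> carrier G"
  shows "(\<forall>s\<in>S1. f1 s \<otimes>\<^bsub>G\<^esub> c = s) \<longleftrightarrow> (\<forall>s\<in>S1. f1 s = s) \<and> c = \<one>\<^bsub>G\<^esub>"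
proof -
  interpret comm_group G by fact
  show ?thesis
  proof
    assume H: "\<forall>s\<in>S1. f1 s \<otimes>\<^bsub>G\<^esub> c = s"
    have cd: "c = \<one>\<^bsub>G\<^esub>" using H[rule_format, OF u1(1)] u1 c by simp
    then show "(\<forall>s\<in>S1. f1 s = s) \<and> c = \<one>\<^bsub>G\<^esub>" using H f1 by (auto simp: Pi_iff)
  qed (use S1 f1 in \<open>auto simp: Pi_iff\<close>)
qed

lemma translation_bij:
  assumes "group G" "c \<in> carrier G"
  shows "bij_betw (\<lambda>s. s \<otimes>\<^bsub>G\<^esub> c) (carrier G) (carrier G)"
proof -
  interpret group G by fact
  show ?thesis
    by (rule bij_betw_byWitness[where f'="\<lambda>s. s \<otimes>\<^bsub>G\<^esub> inv\<^bsub>G\<^esub> c"])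
       (use assms(2) in \<open>auto simp: m_assoc\<close>)
qed

lemma inv_into_eq_iff:
  assumes "bij_betw f S T" "v \<in> S" "s \<in> T"
  shows "(v = inv_into S f s) \<longleftrightarrow> f v = s"
  using assms by (metis bij_betw_imp_surj_on bij_betw_inv_into_left f_inv_into_f)

lemma mult_eq_one_iff:
  assumes "group G" "u \<in> carrier G" "v \<in> carrier G"
  shows "(u \<otimes>\<^bsub>G\<^esub> v = \<one>\<^bsub>G\<^esub>) \<longleftrightarrow> (u = inv\<^bsub>G\<^esub> v)"
proof -
  interpret group G by fact
  show ?thesis using assms(2,3)
    by (metis inv_equality inv_closed r_inv)
qed
lemma rearrR:
  assumes "comm_group G" "p1 \<in> carrier G" "p2 \<in> carrier G" "p3 \<in> carrier G"
    "q1 \<in> carrier G" "q2 \<in> carrier G" "q3 \<in> carrier G" "r \<in> carrier G"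
  shows "(p1 \<otimes>\<^bsub>G\<^esub> p2 \<otimes>\<^bsub>G\<^esub> p3) \<otimes>\<^bsub>G\<^esub> (q1 \<otimes>\<^bsub>G\<^esub> q2 \<otimes>\<^bsub>G\<^esub> q3) \<otimes>\<^bsub>G\<^esub> r
    = p1 \<otimes>\<^bsub>G\<^esub> q1 \<otimes>\<^bsub>G\<^esub> (p2 \<otimes>\<^bsub>G\<^esub> q2) \<otimes>\<^bsub>G\<^esub> (p3 \<otimes>\<^bsub>G\<^esub> r \<otimes>\<^bsub>G\<^esub> q3)"
proof -
  interpret comm_group G by fact
  show ?thesis using assms(2-) by (simp add: m_ac)
qed

lemma rearrL:
  assumes "comm_group G" "p1 \<in> carrier G" "p2 \<in> carrier G" "p3 \<in> carrier G"
    "w \<in> carrier G" "r \<in> carrier G"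
  shows "(p1 \<otimes>\<^bsub>G\<^esub> p2 \<otimes>\<^bsub>G\<^esub> p3) \<otimes>\<^bsub>G\<^esub> w \<otimes>\<^bsub>G\<^esub> r
    = p1 \<otimes>\<^bsub>G\<^esub> p2 \<otimes>\<^bsub>G\<^esub> w \<otimes>\<^bsub>G\<^esub> (r \<otimes>\<^bsub>G\<^esub> p3)"
proof -
  interpret comm_group G by fact
  show ?thesis using assms(2-) by (simp add: m_ac)
qed

lemma rearr5:
  assumes "comm_group G" "p1 \<in> carrier G" "p2 \<in> carrier G" "p3 \<in> carrier G"
    "q \<in> carrier G" "r \<in> carrier G"
  shows "(p1 \<otimes>\<^bsub>G\<^esub> p2 \<otimes>\<^bsub>G\<^esub> p3) \<otimes>\<^bsub>G\<^esub> q \<otimes>\<^bsub>G\<^esub> r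
    = p1 \<otimes>\<^bsub>G\<^esub> (p2 \<otimes>\<^bsub>G\<^esub> q) \<otimes>\<^bsub>G\<^esub> (p3 \<otimes>\<^bsub>G\<^esub> r)"
proof -
  interpret comm_group G by fact
  show ?thesis using assms(2-) by (simp add: m_ac)
qed

lemma solve_sigma:
  assumes "group G" "s \<in> carrier G" "s' \<in> carrier G" "D \<in> carrier G"
    "s \<otimes>\<^bsub>G\<^esub> inv\<^bsub>G\<^esub> s' = D"
  shows "s' = inv\<^bsub>G\<^esub> D \<otimes>\<^bsub>G\<^esub> s"
proof -
  interpret group G by fact
  have "s = D \<otimes>\<^bsub>G\<^esub> s'" using assms(2-) inv_solve_right' by blast
  then show ?thesis using assms(2-) inv_solve_left by blast
qed

lemma cohom_rearr:
  assumes "comm_group G" "a \<in> carrier G" "b \<in> carrier G" "c \<in> carrier G"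
    "d \<in> carrier G" "e \<in> carrier G" "f \<in> carrier G"
  shows "a \<otimes>\<^bsub>G\<^esub> b \<otimes>\<^bsub>G\<^esub> (inv\<^bsub>G\<^esub> (c \<otimes>\<^bsub>G\<^esub> inv\<^bsub>G\<^esub> e \<otimes>\<^bsub>G\<^esub> d) \<otimes>\<^bsub>G\<^esub> f)
     = (a \<otimes>\<^bsub>G\<^esub> inv\<^bsub>G\<^esub> c) \<otimes>\<^bsub>G\<^esub> (b \<otimes>\<^bsub>G\<^esub> inv\<^bsub>G\<^esub> d) \<otimes>\<^bsub>G\<^esub> f \<otimes>\<^bsub>G\<^esub> e"
proof -
  interpret comm_group G by fact
  show ?thesis using assms(2-) by (simp add: inv_mult m_ac)
qed

lemma cancel_inv_right:
  assumes "group G" "a \<in> carrier G" "b \<in> carrier G"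
  shows "a \<otimes>\<^bsub>G\<^esub> inv\<^bsub>G\<^esub> b \<otimes>\<^bsub>G\<^esub> b = a"
proof -
  interpret group G by fact
  show ?thesis using assms(2-) by (simp add: m_assoc)
qed
locale thm_setup =
  fixes op :: "'x \<Rightarrow> 'x \<Rightarrow> 'x" and \<rho> :: "'x \<Rightarrow> 'x"
    and A :: "'x \<Rightarrow> ('a, 'm) monoid_scheme"
    and \<phi> \<psi> :: "'x \<Rightarrow> 'x \<Rightarrow> 'a \<Rightarrow> 'a" and \<eta> :: "'x \<Rightarrow> 'a \<Rightarrow> 'a"
    and \<sigma> :: "'x \<Rightarrow> 'x \<Rightarrow> 'a"
  assumes symrack: "symmetric_rack op \<rho>"
    and ab: "\<And>x. comm_group (A x)"
    and phi_iso: "\<And>x y. \<phi> x y \<in> iso (A x) (A (op x y))"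
    and psi_hom: "\<And>x y. \<psi> x y \<in> hom (A y) (A (op x y))"
    and eta_hom: "\<And>x. \<eta> x \<in> hom (A x) (A (\<rho> x))"
    and sigma_in: "\<And>x y. \<sigma> x y \<in> carrier (A (op x y))"
begin

abbreviation "\<alpha> \<equiv> alpha_of op A \<phi> \<psi> \<sigma>"

lemma grp: "group (A x)" using ab comm_group.axioms(2) by blast

lemma phi_hom: "\<phi> x y \<in> hom (A x) (A (op x y))" using phi_iso by (simp add: iso_def)
lemma phi_bij: "bij_betw (\<phi> x y) (carrier (A x)) (carrier (A (op x y)))" using phi_iso by (simp add: iso_def)

lemma m_closed' [simp]: "a \<in> carrier (A x) \<Longrightarrow> b \<in> carrier (A x) \<Longrightarrow> a \<otimes>\<^bsub>A x\<^esub> b \<in> carrier (A x)"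
  by (simp add: grp group.subgroup_self subgroup.m_closed)
lemma one_closed' [simp]: "\<one>\<^bsub>A x\<^esub> \<in> carrier (A x)"
  by (simp add: grp group.subgroup_self subgroup.one_closed)
lemma inv_closed' [simp]: "a \<in> carrier (A x) \<Longrightarrow> inv\<^bsub>A x\<^esub> a \<in> carrier (A x)"
  by (simp add: grp group.inv_closed)
lemma l_one' [simp]: "a \<in> carrier (A x) \<Longrightarrow> \<one>\<^bsub>A x\<^esub> \<otimes>\<^bsub>A x\<^esub> a = a"
  by (simp add: grp group.is_monoid monoid.l_one)
lemma r_one' [simp]: "a \<in> carrier (A x) \<Longrightarrow> a \<otimes>\<^bsub>A x\<^esub> \<one>\<^bsub>A x\<^esub> = a"
  by (simp add: grp group.is_monoid monoid.r_one)

lemma phi_closed [simp]: "a \<in> carrier (A x) \<Longrightarrow> \<phi> x y a \<in> carrier (A (op x y))"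
  using phi_hom by (auto simp: hom_def)
lemma psi_closed [simp]: "a \<in> carrier (A y) \<Longrightarrow> \<psi> x y a \<in> carrier (A (op x y))"
  using psi_hom by (auto simp: hom_def)
lemma eta_closed [simp]: "a \<in> carrier (A x) \<Longrightarrow> \<eta> x a \<in> carrier (A (\<rho> x))"
  using eta_hom by (auto simp: hom_def)
lemma phi_mult [simp]: "a \<in> carrier (A x) \<Longrightarrow> b \<in> carrier (A x) \<Longrightarrow>
   \<phi> x y (a \<otimes>\<^bsub>A x\<^esub> b) = \<phi> x y a \<otimes>\<^bsub>A (op x y)\<^esub> \<phi> x y b"
  using phi_hom by (simp add: hom_mult)
lemma psi_mult [simp]: "a \<in> carrier (A y) \<Longrightarrow> b \<in> carrier (A y) \<Longrightarrow>
   \<psi> x y (a \<otimes>\<^bsub>A y\<^esub> b) = \<psi> x y a \<otimes>\<^bsub>A (op x y)\<^esub> \<psi> x y b"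
  using psi_hom by (simp add: hom_mult)
lemma eta_mult [simp]: "a \<in> carrier (A x) \<Longrightarrow> b \<in> carrier (A x) \<Longrightarrow>
   \<eta> x (a \<otimes>\<^bsub>A x\<^esub> b) = \<eta> x a \<otimes>\<^bsub>A (\<rho> x)\<^esub> \<eta> x b"
  using eta_hom by (simp add: hom_mult)
lemma phi_one [simp]: "\<phi> x y \<one>\<^bsub>A x\<^esub> = \<one>\<^bsub>A (op x y)\<^esub>"
  using phi_hom grp by (simp add: hom_one)
lemma psi_one [simp]: "\<psi> x y \<one>\<^bsub>A y\<^esub> = \<one>\<^bsub>A (op x y)\<^esub>"
  using psi_hom grp by (simp add: hom_one)
lemma eta_one [simp]: "\<eta> x \<one>\<^bsub>A x\<^esub> = \<one>\<^bsub>A (\<rho> x)\<^esub>"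
  using eta_hom grp by (simp add: hom_one)
lemma phi_inv [simp]: "a \<in> carrier (A x) \<Longrightarrow> \<phi> x y (inv\<^bsub>A x\<^esub> a) = inv\<^bsub>A (op x y)\<^esub> \<phi> x y a"
  using phi_hom grp by (simp add: group_hom.hom_inv group_hom_axioms_def group_hom_def)
lemma psi_inv [simp]: "a \<in> carrier (A y) \<Longrightarrow> \<psi> x y (inv\<^bsub>A y\<^esub> a) = inv\<^bsub>A (op x y)\<^esub> \<psi> x y a"
  using psi_hom grp by (simp add: group_hom.hom_inv group_hom_axioms_def group_hom_def)
lemma eta_inv [simp]: "a \<in> carrier (A x) \<Longrightarrow> \<eta> x (inv\<^bsub>A x\<^esub> a) = inv\<^bsub>A (\<rho> x)\<^esub> \<eta> x a"
  using eta_hom grp by (simp add: group_hom.hom_inv group_hom_axioms_def group_hom_def)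

lemma alpha_closed [simp]: "s \<in> carrier (A x) \<Longrightarrow> t \<in> carrier (A y) \<Longrightarrow> \<alpha> x y s t \<in> carrier (A (op x y))"
  by (simp add: alpha_of_def sigma_in)

lemma alpha_bij: "t \<in> carrier (A y) \<Longrightarrow> bij_betw (\<lambda>s. \<alpha> x y s t) (carrier (A x)) (carrier (A (op x y)))"
proof -
  assume t: "t \<in> carrier (A y)"
  have "bij_betw ((\<lambda>u. u \<otimes>\<^bsub>A (op x y)\<^esub> (\<psi> x y t \<otimes>\<^bsub>A (op x y)\<^esub> \<sigma> x y)) \<circ> \<phi> x y) (carrier (A x)) (carrier (A (op x y)))"
    by (rule bij_betw_trans[OF phi_bij translation_bij[OF grp]]) (simp add: t sigma_in)
  moreover have "\<And>s. s \<in> carrier (A x) \<Longrightarrow> ((\<lambda>u. u \<otimes>\<^bsub>A (op x y)\<^esub> (\<psi> x y t \<otimes>\<^bsub>A (op x y)\<^esub> \<sigma> x y)) \<circ> \<phi> x y) s = \<alpha> x y s t"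
    using t by (simp add: alpha_of_def sigma_in grp group.is_monoid monoid.m_assoc)
  ultimately show ?thesis by (rule bij_betw_cong[THEN iffD1, rotated])
qed

lemma selfdist: "op (op x y) z = op (op x z) (op y z)"
  using symrack by (simp add: symmetric_rack_def rack_def)
lemma rho_op: "\<rho> (op x y) = op (\<rho> x) y"
  using symrack by (simp add: symmetric_rack_def good_involution_def)
lemma rho_rho [simp]: "\<rho> (\<rho> x) = x"
  using symrack by (simp add: symmetric_rack_def good_involution_def)
lemma rinv_eq: "rinv op x y = op x (\<rho> y)"
  using symrack by (simp add: symmetric_rack_def good_involution_def)
lemma op_rinv: "op (op x (\<rho> y)) y = x"
proof -
  have "bij (\<lambda>x. op x y)" using symrack by (simp add: symmetric_rack_def rack_def)
  then have "op (rinv op x y) y = x" unfolding rinv_def by (meson bij_inv_eq_iff)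
  then show ?thesis by (simp add: rinv_eq)
qed

end
context thm_setup begin

lemma nL2: 
  assumes "s \<in> carrier (A x)" "t \<in> carrier (A y)" "w \<in> carrier (A z)"
  shows "\<alpha> (op x y) z (\<alpha> x y s t) w =
     \<phi> (op x y) z (\<phi> x y s) \<otimes>\<^bsub>A (op (op x y) z)\<^esub> \<phi> (op x y) z (\<psi> x y t)
      \<otimes>\<^bsub>A (op (op x y) z)\<^esub> \<psi> (op x y) z w
      \<otimes>\<^bsub>A (op (op x y) z)\<^esub> (\<sigma> (op x y) z \<otimes>\<^bsub>A (op (op x y) z)\<^esub> \<phi> (op x y) z (\<sigma> x y))"
proof -
  interpret G: comm_group "A (op (op x y) z)" by (rule ab)
  show ?thesis using assms by (simp add: alpha_of_def sigma_in G.m_ac)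
qed

end
context thm_setup begin

lemma nR2: 
  assumes "s \<in> carrier (A x)" "t \<in> carrier (A y)" "w \<in> carrier (A z)"
  shows "\<alpha> (op x z) (op y z) (\<alpha> x z s w) (\<alpha> y z t w) =
     \<phi> (op x z) (op y z) (\<phi> x z s) \<otimes>\<^bsub>A (op (op x z) (op y z))\<^esub> \<psi> (op x z) (op y z) (\<phi> y z t)
      \<otimes>\<^bsub>A (op (op x z) (op y z))\<^esub> (\<phi> (op x z) (op y z) (\<psi> x z w)
                          \<otimes>\<^bsub>A (op (op x z) (op y z))\<^esub> \<psi> (op x z) (op y z) (\<psi> y z w))
      \<otimes>\<^bsub>A (op (op x z) (op y z))\<^esub> (\<phi> (op x z) (op y z) (\<sigma> x z) \<otimes>\<^bsub>A (op (op x z) (op y z))\<^esub> \<sigma> (op x z) (op y z)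
            \<otimes>\<^bsub>A (op (op x z) (op y z))\<^esub> \<psi> (op x z) (op y z) (\<sigma> y z))"
  unfolding alpha_of_def
  using assms by (simp add: sigma_in rearrR[OF ab])

end
context thm_setup begin

lemma C2_xyz:
  "(\<forall>s\<in>carrier (A x). \<forall>t\<in>carrier (A y). \<forall>w\<in>carrier (A z).
      \<alpha> (op x y) z (\<alpha> x y s t) w = \<alpha> (op x z) (op y z) (\<alpha> x z s w) (\<alpha> y z t w))
   \<longleftrightarrow> (\<forall>a\<in>carrier (A x). \<phi> (op x y) z (\<phi> x y a) = \<phi> (op x z) (op y z) (\<phi> x z a))
     \<and> (\<forall>b\<in>carrier (A y). \<phi> (op x y) z (\<psi> x y b) = \<psi> (op x z) (op y z) (\<phi> y z b))
     \<and> (\<forall>a\<in>carrier (A z). \<psi> (op x y) z a = \<phi> (op x z) (op y z) (\<psi> x z a)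
                          \<otimes>\<^bsub>A (op (op x z) (op y z))\<^esub> \<psi> (op x z) (op y z) (\<psi> y z a))
     \<and> (\<sigma> (op x y) z \<otimes>\<^bsub>A (op (op x y) z)\<^esub> \<phi> (op x y) z (\<sigma> x y)
        = \<phi> (op x z) (op y z) (\<sigma> x z) \<otimes>\<^bsub>A (op (op x z) (op y z))\<^esub> \<sigma> (op x z) (op y z)
            \<otimes>\<^bsub>A (op (op x z) (op y z))\<^esub> \<psi> (op x z) (op y z) (\<sigma> y z))"
proof -
  have GG: "A (op (op x z) (op y z)) = A (op (op x y) z)" by (simp only: selfdist[of x y z])
  have cl: "\<And>a. a \<in> carrier (A (op (op x z) (op y z))) \<Longrightarrow> a \<in> carrier (A (op (op x y) z))"
    using GG by simp
  have o: "\<one>\<^bsub>A (op (op x z) (op y z))\<^esub> = \<one>\<^bsub>A (op (op x y) z)\<^esub>" using GG by simp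
  have step1: "(\<forall>s\<in>carrier (A x). \<forall>t\<in>carrier (A y). \<forall>w\<in>carrier (A z).
      \<alpha> (op x y) z (\<alpha> x y s t) w = \<alpha> (op x z) (op y z) (\<alpha> x z s w) (\<alpha> y z t w))
    \<longleftrightarrow> (\<forall>s\<in>carrier (A x). \<forall>t\<in>carrier (A y). \<forall>w\<in>carrier (A z).
     \<phi> (op x y) z (\<phi> x y s) \<otimes>\<^bsub>A (op (op x y) z)\<^esub> \<phi> (op x y) z (\<psi> x y t)
      \<otimes>\<^bsub>A (op (op x y) z)\<^esub> \<psi> (op x y) z w
      \<otimes>\<^bsub>A (op (op x y) z)\<^esub> (\<sigma> (op x y) z \<otimes>\<^bsub>A (op (op x y) z)\<^esub> \<phi> (op x y) z (\<sigma> x y))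
    = \<phi> (op x z) (op y z) (\<phi> x z s) \<otimes>\<^bsub>A (op (op x z) (op y z))\<^esub> \<psi> (op x z) (op y z) (\<phi> y z t)
      \<otimes>\<^bsub>A (op (op x z) (op y z))\<^esub> (\<phi> (op x z) (op y z) (\<psi> x z w)
                          \<otimes>\<^bsub>A (op (op x z) (op y z))\<^esub> \<psi> (op x z) (op y z) (\<psi> y z w))
      \<otimes>\<^bsub>A (op (op x z) (op y z))\<^esub> (\<phi> (op x z) (op y z) (\<sigma> x z) \<otimes>\<^bsub>A (op (op x z) (op y z))\<^esub> \<sigma> (op x z) (op y z)
            \<otimes>\<^bsub>A (op (op x z) (op y z))\<^esub> \<psi> (op x z) (op y z) (\<sigma> y z)))"
    by (intro ball_cong refl) (simp only: nL2 nR2)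
  show ?thesis
    unfolding step1
    apply (rule affine3[OF ab GG _ _ _ _ _ _ one_closed' _ _ one_closed' _ _ one_closed'])
    apply (simp_all add: Pi_iff sigma_in cl)
    apply (simp_all add: o)
    done
qed

end
context thm_setup begin

lemma eta_closed2: "a \<in> carrier (A (op x y)) \<Longrightarrow> \<eta> (op x y) a \<in> carrier (A (op (\<rho> x) y))"
  using eta_closed[of a "op x y"] by (simp add: rho_op)

lemma C3_xy:
  "(\<forall>s\<in>carrier (A x). \<forall>t\<in>carrier (A y). \<alpha> (\<rho> x) y (\<eta> x s) t = \<eta> (op x y) (\<alpha> x y s t))
   \<longleftrightarrow> (\<forall>a\<in>carrier (A x). \<eta> (op x y) (\<phi> x y a) = \<phi> (\<rho> x) y (\<eta> x a))
     \<and> (\<forall>b\<in>carrier (A y). \<psi> (\<rho> x) y b = \<eta> (op x y) (\<psi> x y b))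
     \<and> \<sigma> (\<rho> x) y = \<eta> (op x y) (\<sigma> x y)"
proof -
  have nR: "\<eta> (op x y) (\<alpha> x y s t) = \<eta> (op x y) (\<phi> x y s) \<otimes>\<^bsub>A (\<rho> (op x y))\<^esub> \<eta> (op x y) (\<psi> x y t)
      \<otimes>\<^bsub>A (\<rho> (op x y))\<^esub> \<eta> (op x y) (\<sigma> x y)"
    if "s \<in> carrier (A x)" "t \<in> carrier (A y)" for s t
    using that by (simp add: alpha_of_def sigma_in)
  have GG: "A (\<rho> (op x y)) = A (op (\<rho> x) y)" by (simp only: rho_op)
  have o: "\<one>\<^bsub>A (\<rho> (op x y))\<^esub> = \<one>\<^bsub>A (op (\<rho> x) y)\<^esub>" using GG by simp
  have "(\<forall>s\<in>carrier (A x). \<forall>t\<in>carrier (A y). \<alpha> (\<rho> x) y (\<eta> x s) t = \<eta> (op x y) (\<alpha> x y s t))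
    \<longleftrightarrow> (\<forall>s\<in>carrier (A x). \<forall>t\<in>carrier (A y). \<phi> (\<rho> x) y (\<eta> x s) \<otimes>\<^bsub>A (op (\<rho> x) y)\<^esub> \<psi> (\<rho> x) y t \<otimes>\<^bsub>A (op (\<rho> x) y)\<^esub> \<sigma> (\<rho> x) y
       = \<eta> (op x y) (\<phi> x y s) \<otimes>\<^bsub>A (\<rho> (op x y))\<^esub> \<eta> (op x y) (\<psi> x y t)
      \<otimes>\<^bsub>A (\<rho> (op x y))\<^esub> \<eta> (op x y) (\<sigma> x y))"
    by (intro ball_cong refl) (simp only: nR, simp only: alpha_of_def)
  also have "\<dots> \<longleftrightarrow> (\<forall>a\<in>carrier (A x). \<phi> (\<rho> x) y (\<eta> x a) = \<eta> (op x y) (\<phi> x y a))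
     \<and> (\<forall>b\<in>carrier (A y). \<psi> (\<rho> x) y b = \<eta> (op x y) (\<psi> x y b))
     \<and> \<sigma> (\<rho> x) y = \<eta> (op x y) (\<sigma> x y)"
    apply (rule affine2[OF ab GG _ _ _ _ one_closed' _ _ one_closed'])
    apply (simp_all add: Pi_iff sigma_in eta_closed2)
    apply (simp_all add: o)
    done
  finally have E: "(\<forall>s\<in>carrier (A x). \<forall>t\<in>carrier (A y). \<alpha> (\<rho> x) y (\<eta> x s) t = \<eta> (op x y) (\<alpha> x y s t))
    \<longleftrightarrow> (\<forall>a\<in>carrier (A x). \<phi> (\<rho> x) y (\<eta> x a) = \<eta> (op x y) (\<phi> x y a))
     \<and> (\<forall>b\<in>carrier (A y). \<psi> (\<rho> x) y b = \<eta> (op x y) (\<psi> x y b))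
     \<and> \<sigma> (\<rho> x) y = \<eta> (op x y) (\<sigma> x y)" .
  have F: "(\<forall>a\<in>carrier (A x). \<phi> (\<rho> x) y (\<eta> x a) = \<eta> (op x y) (\<phi> x y a))
    \<longleftrightarrow> (\<forall>a\<in>carrier (A x). \<eta> (op x y) (\<phi> x y a) = \<phi> (\<rho> x) y (\<eta> x a))"
    by (rule ball_cong[OF refl eq_commute])
  show ?thesis using E F by (simp only:)
qed

lemma C5_xy:
  "(\<forall>s\<in>carrier (A x). \<forall>t\<in>carrier (A y).
      \<alpha> x (\<rho> y) s (\<eta> y t) = inv_into (carrier (A (rinv op x y))) (\<lambda>s'. \<alpha> (rinv op x y) y s' t) s)
   \<longleftrightarrow> (\<forall>a\<in>carrier (A x). \<phi> (rinv op x y) y (\<phi> x (\<rho> y) a) = a)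
     \<and> (\<forall>b\<in>carrier (A y). \<phi> (rinv op x y) y (\<psi> x (\<rho> y) (\<eta> y b))
          = inv\<^bsub>A (op (op x (\<rho> y)) y)\<^esub> (\<psi> (op x (\<rho> y)) y b))
     \<and> \<phi> (op x (\<rho> y)) y (\<sigma> x (\<rho> y)) = inv\<^bsub>A (op (op x (\<rho> y)) y)\<^esub> (\<sigma> (op x (\<rho> y)) y)"
proof -
  have "(\<forall>s\<in>carrier (A x). \<forall>t\<in>carrier (A y).
      \<alpha> x (\<rho> y) s (\<eta> y t) = inv_into (carrier (A (rinv op x y))) (\<lambda>s'. \<alpha> (rinv op x y) y s' t) s)
    \<longleftrightarrow> (\<forall>s\<in>carrier (A x). \<forall>t\<in>carrier (A y). \<alpha> (op x (\<rho> y)) y (\<alpha> x (\<rho> y) s (\<eta> y t)) t = s)"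
    unfolding rinv_eq
    apply (intro ball_cong refl)
    apply (rule inv_into_eq_iff[OF alpha_bij])
      apply assumption
     apply simp
    apply (simp add: op_rinv)
    done
  also have "\<dots> \<longleftrightarrow> (\<forall>s\<in>carrier (A x). \<forall>t\<in>carrier (A y).
       \<phi> (op x (\<rho> y)) y (\<phi> x (\<rho> y) s) \<otimes>\<^bsub>A (op (op x (\<rho> y)) y)\<^esub> (\<phi> (op x (\<rho> y)) y (\<psi> x (\<rho> y) (\<eta> y t)) \<otimes>\<^bsub>A (op (op x (\<rho> y)) y)\<^esub> \<psi> (op x (\<rho> y)) y t)
       \<otimes>\<^bsub>A (op (op x (\<rho> y)) y)\<^esub> (\<phi> (op x (\<rho> y)) y (\<sigma> x (\<rho> y)) \<otimes>\<^bsub>A (op (op x (\<rho> y)) y)\<^esub> \<sigma> (op x (\<rho> y)) y) = s)"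
    apply (intro ball_cong refl)
    unfolding alpha_of_def
    apply (simp add: sigma_in rearr5[OF ab])
    done
  also have "\<dots> \<longleftrightarrow> (\<forall>s\<in>carrier (A x). \<phi> (op x (\<rho> y)) y (\<phi> x (\<rho> y) s) = s)
     \<and> (\<forall>t\<in>carrier (A y). \<phi> (op x (\<rho> y)) y (\<psi> x (\<rho> y) (\<eta> y t)) \<otimes>\<^bsub>A (op (op x (\<rho> y)) y)\<^esub> \<psi> (op x (\<rho> y)) y t = \<one>\<^bsub>A (op (op x (\<rho> y)) y)\<^esub>)
     \<and> \<phi> (op x (\<rho> y)) y (\<sigma> x (\<rho> y)) \<otimes>\<^bsub>A (op (op x (\<rho> y)) y)\<^esub> \<sigma> (op x (\<rho> y)) y = \<one>\<^bsub>A (op (op x (\<rho> y)) y)\<^esub>"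
    apply (rule affine2_id[OF ab _ _ _ _ _ one_closed'])
    apply (simp_all add: Pi_iff sigma_in)
    apply (simp_all add: op_rinv)
    done
  also have "\<dots> \<longleftrightarrow> (\<forall>a\<in>carrier (A x). \<phi> (rinv op x y) y (\<phi> x (\<rho> y) a) = a)
     \<and> (\<forall>b\<in>carrier (A y). \<phi> (rinv op x y) y (\<psi> x (\<rho> y) (\<eta> y b))
          = inv\<^bsub>A (op (op x (\<rho> y)) y)\<^esub> (\<psi> (op x (\<rho> y)) y b))
     \<and> \<phi> (op x (\<rho> y)) y (\<sigma> x (\<rho> y)) = inv\<^bsub>A (op (op x (\<rho> y)) y)\<^esub> (\<sigma> (op x (\<rho> y)) y)"
    unfolding rinv_eq
    apply (intro conj_cong ball_cong refl)
     apply (rule mult_eq_one_iff[OF grp])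
      apply simp
     apply simp
    apply (rule mult_eq_one_iff[OF grp])
     apply (simp add: sigma_in)
    apply (simp add: sigma_in)
    done
  finally show ?thesis .
qed

lemma C6_x:
  assumes xx: "op x x = x"
  shows "(\<forall>s\<in>carrier (A x). \<alpha> x x s s = s)
   \<longleftrightarrow> (\<forall>a\<in>carrier (A x). \<phi> x x a \<otimes>\<^bsub>A (op x x)\<^esub> \<psi> x x a = a) \<and> \<sigma> x x = \<one>\<^bsub>A (op x x)\<^esub>"
  unfolding alpha_of_def
  apply (rule affine1_id[OF ab])
  apply (simp_all add: Pi_iff sigma_in)
  apply (simp_all add: xx)
  done

lemma cohom_dyn:
  assumes coh: "cohomologous_2cocycles op \<rho> A \<phi> \<psi> \<eta> \<sigma> \<sigma>'"
    and s': "\<And>x y. \<sigma>' x y \<in> carrier (A (op x y))"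
  shows "cohomologous_dyn op \<rho> (\<lambda>x. carrier (A x)) \<alpha> \<eta> (alpha_of op A \<phi> \<psi> \<sigma>') \<eta>"
proof -
  obtain \<tau> where \<tau>: "\<And>x. \<tau> x \<in> carrier (A x)" and te: "\<And>x. \<eta> x (\<tau> x) = \<tau> (\<rho> x)"
    and H: "\<And>x y. \<sigma> x y \<otimes>\<^bsub>A (op x y)\<^esub> inv\<^bsub>A (op x y)\<^esub> (\<sigma>' x y)
                 = \<phi> x y (\<tau> x) \<otimes>\<^bsub>A (op x y)\<^esub> inv\<^bsub>A (op x y)\<^esub> (\<tau> (op x y))
                     \<otimes>\<^bsub>A (op x y)\<^esub> \<psi> x y (\<tau> y)"
    using coh unfolding cohomologous_2cocycles_def by blast
  have bij: "bij_betw (\<lambda>a. a \<otimes>\<^bsub>A x\<^esub> \<tau> x) (carrier (A x)) (carrier (A x))" for x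
    by (rule translation_bij[OF grp \<tau>])
  have inv: "inv_into (carrier (A x)) (\<lambda>a. a \<otimes>\<^bsub>A x\<^esub> \<tau> x) s = s \<otimes>\<^bsub>A x\<^esub> inv\<^bsub>A x\<^esub> \<tau> x"
    if "s \<in> carrier (A x)" for x s
  proof -
    have "(s \<otimes>\<^bsub>A x\<^esub> inv\<^bsub>A x\<^esub> \<tau> x = inv_into (carrier (A x)) (\<lambda>a. a \<otimes>\<^bsub>A x\<^esub> \<tau> x) s)"
      apply (rule inv_into_eq_iff[OF bij, THEN iffD2])
      using that \<tau> apply simp
      using that apply simp
      using that \<tau>[of x] by (simp add: cancel_inv_right[OF grp])
    then show ?thesis by simp
  qed
  show ?thesis
    unfolding cohomologous_dyn_def
  proof (rule exI[where x="\<lambda>x a. a \<otimes>\<^bsub>A x\<^esub> \<tau> x"], intro conjI allI ballI)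
    fix x show "bij_betw (\<lambda>a. a \<otimes>\<^bsub>A x\<^esub> \<tau> x) (carrier (A x)) (carrier (A x))" by (rule bij)
  next
    fix x y s t assume s: "s \<in> carrier (A x)" and t: "t \<in> carrier (A y)"
    have sol: "\<sigma>' x y = inv\<^bsub>A (op x y)\<^esub> (\<phi> x y (\<tau> x) \<otimes>\<^bsub>A (op x y)\<^esub> inv\<^bsub>A (op x y)\<^esub> (\<tau> (op x y))
                     \<otimes>\<^bsub>A (op x y)\<^esub> \<psi> x y (\<tau> y)) \<otimes>\<^bsub>A (op x y)\<^esub> \<sigma> x y"
      by (rule solve_sigma[OF grp sigma_in s' _ H]) (simp add: \<tau>)
    show "alpha_of op A \<phi> \<psi> \<sigma>' x y s t = (\<lambda>a. a \<otimes>\<^bsub>A (op x y)\<^esub> \<tau> (op x y))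
          (\<alpha> x y (inv_into (carrier (A x)) (\<lambda>a. a \<otimes>\<^bsub>A x\<^esub> \<tau> x) s) (inv_into (carrier (A y)) (\<lambda>a. a \<otimes>\<^bsub>A y\<^esub> \<tau> y) t))"
      unfolding inv[OF s] inv[OF t] alpha_of_def sol
      using s t \<tau> by (simp add: sigma_in cohom_rearr[OF ab])
  next
    fix x s assume s: "s \<in> carrier (A x)"
    show "\<eta> x s = (\<lambda>a. a \<otimes>\<^bsub>A (\<rho> x)\<^esub> \<tau> (\<rho> x)) (\<eta> x (inv_into (carrier (A x)) (\<lambda>a. a \<otimes>\<^bsub>A x\<^esub> \<tau> x) s))"
      unfolding inv[OF s] using s \<tau>[of x] \<tau>[of "\<rho> x"]
      by (simp add: te cancel_inv_right[OF grp])
  qed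
qed

end
context thm_setup begin

lemma dyn_iff:
  "dynamical_cocycle op \<rho> (\<lambda>x. carrier (A x)) \<alpha> \<eta>
     \<longleftrightarrow> sym_rack_module op \<rho> A \<phi> \<psi> \<eta> \<and> sym_rack_2cocycle op \<rho> A \<phi> \<psi> \<eta> \<sigma>"
  unfolding dynamical_cocycle_def sym_rack_module_def sym_rack_2cocycle_def
  apply (simp only: C2_xyz C3_xy C5_xy all_conj_distrib)
  apply (auto simp add: alpha_bij ab phi_iso psi_hom eta_hom sigma_in)
  done

end
theorem theorem4p1:
  fixes op :: "'x \<Rightarrow> 'x \<Rightarrow> 'x" and \<rho> :: "'x \<Rightarrow> 'x"
    and A :: "'x \<Rightarrow> ('a, 'm) monoid_scheme"
    and \<phi> \<psi> :: "'x \<Rightarrow> 'x \<Rightarrow> 'a \<Rightarrow> 'a" and \<eta> :: "'x \<Rightarrow> 'a \<Rightarrow> 'a"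
    and \<sigma> :: "'x \<Rightarrow> 'x \<Rightarrow> 'a"
  assumes symrack: "symmetric_rack op \<rho>"
    and ab: "\<And>x. comm_group (A x)"
    and phi_iso: "\<And>x y. \<phi> x y \<in> iso (A x) (A (op x y))"
    and psi_hom: "\<And>x y. \<psi> x y \<in> hom (A y) (A (op x y))"
    and eta_hom: "\<And>x. \<eta> x \<in> hom (A x) (A (\<rho> x))"
    and sigma_in: "\<And>x y. \<sigma> x y \<in> carrier (A (op x y))"
  shows
    "(dynamical_cocycle op \<rho> (\<lambda>x. carrier (A x)) (alpha_of op A \<phi> \<psi> \<sigma>) \<eta>
        \<longleftrightarrow> sym_rack_module op \<rho> A \<phi> \<psi> \<eta> \<and> sym_rack_2cocycle op \<rho> A \<phi> \<psi> \<eta> \<sigma>)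
     \<and> (symmetric_quandle op \<rho> \<longrightarrow>
         (dynamical_cocycle_quandle op \<rho> (\<lambda>x. carrier (A x)) (alpha_of op A \<phi> \<psi> \<sigma>) \<eta>
           \<longleftrightarrow> sym_quandle_module op \<rho> A \<phi> \<psi> \<eta> \<and> sym_quandle_2cocycle op \<rho> A \<phi> \<psi> \<eta> \<sigma>))
     \<and> (\<forall>\<sigma>'. sym_rack_module op \<rho> A \<phi> \<psi> \<eta>
           \<longrightarrow> sym_rack_2cocycle op \<rho> A \<phi> \<psi> \<eta> \<sigma>
           \<longrightarrow> sym_rack_2cocycle op \<rho> A \<phi> \<psi> \<eta> \<sigma>'
           \<longrightarrow> cohomologous_2cocycles op \<rho> A \<phi> \<psi> \<eta> \<sigma> \<sigma>'
           \<longrightarrow> cohomologous_dyn op \<rho> (\<lambda>x. carrier (A x))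
                 (alpha_of op A \<phi> \<psi> \<sigma>) \<eta> (alpha_of op A \<phi> \<psi> \<sigma>') \<eta>)
     \<and> (symmetric_quandle op \<rho> \<longrightarrow> (\<forall>\<sigma>'. sym_quandle_module op \<rho> A \<phi> \<psi> \<eta>
           \<longrightarrow> sym_quandle_2cocycle op \<rho> A \<phi> \<psi> \<eta> \<sigma>
           \<longrightarrow> sym_quandle_2cocycle op \<rho> A \<phi> \<psi> \<eta> \<sigma>'
           \<longrightarrow> cohomologous_2cocycles op \<rho> A \<phi> \<psi> \<eta> \<sigma> \<sigma>'
           \<longrightarrow> cohomologous_dyn op \<rho> (\<lambda>x. carrier (A x))
                 (alpha_of op A \<phi> \<psi> \<sigma>) \<eta> (alpha_of op A \<phi> \<psi> \<sigma>') \<eta>))"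
proof -
  interpret L: thm_setup op \<rho> A \<phi> \<psi> \<eta> \<sigma>
    by (simp add: thm_setup_def assms)
  have P1: "dynamical_cocycle op \<rho> (\<lambda>x. carrier (A x)) (alpha_of op A \<phi> \<psi> \<sigma>) \<eta>
        \<longleftrightarrow> sym_rack_module op \<rho> A \<phi> \<psi> \<eta> \<and> sym_rack_2cocycle op \<rho> A \<phi> \<psi> \<eta> \<sigma>"
    by (rule L.dyn_iff)
  have P2: "dynamical_cocycle_quandle op \<rho> (\<lambda>x. carrier (A x)) (alpha_of op A \<phi> \<psi> \<sigma>) \<eta>
           \<longleftrightarrow> sym_quandle_module op \<rho> A \<phi> \<psi> \<eta> \<and> sym_quandle_2cocycle op \<rho> A \<phi> \<psi> \<eta> \<sigma>"
    if sq: "symmetric_quandle op \<rho>"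
  proof -
    have xx: "\<And>x. op x x = x" using sq by (simp add: symmetric_quandle_def quandle_def)
    have C6all: "(\<forall>x. \<forall>s\<in>carrier (A x). alpha_of op A \<phi> \<psi> \<sigma> x x s s = s)
      \<longleftrightarrow> (\<forall>x. \<forall>a\<in>carrier (A x). \<phi> x x a \<otimes>\<^bsub>A (op x x)\<^esub> \<psi> x x a = a) \<and> (\<forall>x. \<sigma> x x = \<one>\<^bsub>A (op x x)\<^esub>)"
      by (simp only: L.C6_x[OF xx] all_conj_distrib)
    show ?thesis
      unfolding dynamical_cocycle_quandle_def sym_quandle_module_def sym_quandle_2cocycle_def
        P1 C6all by blast
  qed
  have P3: "cohomologous_dyn op \<rho> (\<lambda>x. carrier (A x))
                 (alpha_of op A \<phi> \<psi> \<sigma>) \<eta> (alpha_of op A \<phi> \<psi> \<sigma>') \<eta>"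
    if "sym_rack_2cocycle op \<rho> A \<phi> \<psi> \<eta> \<sigma>'" "cohomologous_2cocycles op \<rho> A \<phi> \<psi> \<eta> \<sigma> \<sigma>'" for \<sigma>'
    using that by (intro L.cohom_dyn) (auto simp: sym_rack_2cocycle_def)
  show ?thesis
    using P1 P2 P3 unfolding sym_quandle_2cocycle_def by blast
qed

end
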